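(* The VCCR $isc$ does not refine Split Cycle (there is a linear profile $\mathbf P$ with $sc(\mathbf P)\not\subseteq isc(\mathbf P)$), and $isc$ fails Positive Involvement in Defeat. Moreover, the VSCC $ISC=\overline{isc}$ fails Tolerant Positive Involvement.
   Context: Profiles: $\mathbf P:V\to\mathcal L(X)$, $V$ nonempty finite set of voters, $X=X(\mathbf P)$ nonempty finite set of candidates, $\mathcal L(X)$ strict linear orders. $\mathrm{Margin}_{\mathbf P}(x,y)$ = #voters ranking $x$ above $y$ minus #ranking $y$ above $x$; $x$ majority preferred to $y$ if $>0$. $\mathcal M(\mathbf P)$: directed graph on $X(\mathbf P)$ with edge $x\to y$ of weight $\mathrm{Margin}_{\mathbf P}(x,y)$ when positive; majority paths are paths in it, the strength of a path being its minimum edge weight. $(x,y)\in sc(\mathbf P)$ iff $\mathrm{Margin}_{\mathbf P}(x,y)>0$ exceeds the strength of every majority path from $y$ to $x$. Ignore-source strength: for a simple path $\rho$ from $a$ to $b$, $\mathrm{Strength}^{is}(\rho)$ is the minimum weight of edges of $\rho$ not starting at $a$ (minimum of the empty set is $\infty$); $\mathrm{Strength}^{is}(a,b)$ is the maximum over majority paths $\rho$ from $a$ to $b$ (maximum of the empty set is $0$). $(x,y)\in isc(\mathbf P)$ iff $\mathrm{Margin}_{\mathbf P}(x,y)>\mathrm{Strength}^{is}(y,x)$; $ISC(\mathbf P)$ = set of candidates not defeated in $isc(\mathbf P)$. Positive Involvement in Defeat (VCCR $f$): if $(x,y)\notin f(\mathbf P)$ and $\mathbf P'$ adds one new voter ranking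 $y$ above $x$, then $(x,y)\notin f(\mathbf P')$. Tolerant Positive Involvement (VSCC $F$): if $x\in F(\mathbf P)$ and $\mathbf P'$ adds one new voter ranking $x$ above every other candidate $y$ to which $x$ is not majority preferred in $\mathbf P$, then $x\in F(\mathbf P')$. *)

theory Defs
  imports "HOL-Library.Extended_Real"
begin

text \<open>Profiles with voters and candidates drawn from nat. A ballot is a strict
linear order on the candidates; (x, y) in the ballot means the voter ranks x above y.\<close>

record prof =
  voters :: "nat set"
  cands  :: "nat set"
  ballot :: "nat \<Rightarrow> (nat \<times> nat) set"

definition profile :: "prof \<Rightarrow> bool" where
  "profile P \<longleftrightarrow> finite (voters P) \<and> voters P \<noteq> {} \<and> finite (cands P) \<and> cands P \<noteq> {} \<and>
     (\<forall>i\<in>voters P. ballot P i \<subseteq> cands P \<times> cands P \<and>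
                    strict_linear_order_on (cands P) (ballot P i))"

definition margin :: "prof \<Rightarrow> nat \<Rightarrow> nat \<Rightarrow> int" where
  "margin P x y = int (card {i\<in>voters P. (x, y) \<in> ballot P i})
                - int (card {i\<in>voters P. (y, x) \<in> ballot P i})"

definition path_edges :: "nat list \<Rightarrow> (nat \<times> nat) list" where
  "path_edges \<rho> = zip \<rho> (tl \<rho>)"

definition mpath :: "prof \<Rightarrow> nat list \<Rightarrow> nat \<Rightarrow> nat \<Rightarrow> bool" where
  "mpath P \<rho> a b \<longleftrightarrow> length \<rho> \<ge> 2 \<and> hd \<rho> = a \<and> last \<rho> = b \<and> distinct \<rho> \<and>
     set \<rho> \<subseteq> cands P \<and> (\<forall>(u, v)\<in>set (path_edges \<rho>). margin P u v > 0)"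

definition strength :: "prof \<Rightarrow> nat list \<Rightarrow> int" where
  "strength P \<rho> = Min {margin P u v | u v. (u, v) \<in> set (path_edges \<rho>)}"

definition sc :: "prof \<Rightarrow> (nat \<times> nat) set" where
  "sc P = {(x, y). x \<in> cands P \<and> y \<in> cands P \<and> margin P x y > 0 \<and>
              (\<forall>\<rho>. mpath P \<rho> y x \<longrightarrow> margin P x y > strength P \<rho>)}"

definition strength_is_path :: "prof \<Rightarrow> nat list \<Rightarrow> nat \<Rightarrow> ereal" where
  "strength_is_path P \<rho> a =
     (let S = {margin P u v | u v. (u, v) \<in> set (path_edges \<rho>) \<and> u \<noteq> a}
      in if S = {} then \<infinity> else ereal (Min S))"

definition strength_is :: "prof \<Rightarrow> nat \<Rightarrow> nat \<Rightarrow> ereal" where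
  "strength_is P a b =
     (if \<exists>\<rho>. mpath P \<rho> a b then Max {strength_is_path P \<rho> a | \<rho>. mpath P \<rho> a b} else 0)"

definition isc :: "prof \<Rightarrow> (nat \<times> nat) set" where
  "isc P = {(x, y). x \<in> cands P \<and> y \<in> cands P \<and>
              ereal (of_int (margin P x y)) > strength_is P y x}"

definition ISC :: "prof \<Rightarrow> nat set" where
  "ISC P = {x \<in> cands P. \<not> (\<exists>y. (y, x) \<in> isc P)}"

definition adds_voter :: "prof \<Rightarrow> prof \<Rightarrow> nat \<Rightarrow> bool" where
  "adds_voter P P' i \<longleftrightarrow> profile P \<and> profile P' \<and> i \<notin> voters P \<and>
     voters P' = insert i (voters P) \<and> cands P' = cands P \<and>
     (\<forall>j\<in>voters P. ballot P' j = ballot P j)"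

definition positive_involvement_in_defeat :: "(prof \<Rightarrow> (nat \<times> nat) set) \<Rightarrow> bool" where
  "positive_involvement_in_defeat f \<longleftrightarrow>
     (\<forall>P P' i x y. adds_voter P P' i \<and> (x, y) \<notin> f P \<and> (y, x) \<in> ballot P' i
        \<longrightarrow> (x, y) \<notin> f P')"

definition tolerant_positive_involvement :: "(prof \<Rightarrow> nat set) \<Rightarrow> bool" where
  "tolerant_positive_involvement F \<longleftrightarrow>
     (\<forall>P P' i x. adds_voter P P' i \<and> x \<in> F P \<and>
        (\<forall>y\<in>cands P. y \<noteq> x \<and> \<not> margin P x y > 0 \<longrightarrow> (x, y) \<in> ballot P' i)
        \<longrightarrow> x \<in> F P')"

end

theory Submission
  imports Defs
begin

fun rel :: "nat list \<Rightarrow> (nat \<times> nat) set" where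
  "rel [] = {}"
| "rel (x # xs) = (\<lambda>y. (x, y)) ` set xs \<union> rel xs"

lemma rel_sub: "rel xs \<subseteq> set xs \<times> set xs"
  by (induction xs) auto

lemma rel_slo: "distinct xs \<Longrightarrow> strict_linear_order_on (set xs) (rel xs)"
proof (induction xs)
  case Nil
  then show ?case by (simp add: strict_linear_order_on_def trans_def irrefl_def total_on_def)
next
  case (Cons x xs)
  have sub: "rel xs \<subseteq> set xs \<times> set xs" by (rule rel_sub)
  from Cons have IH: "trans (rel xs)" "irrefl (rel xs)" "total_on (set xs) (rel xs)"
    by (auto simp: strict_linear_order_on_def)
  have "trans (rel (x # xs))"
    unfolding trans_def
  proof (intro allI impI)
    fix a b c assume ab: "(a, b) \<in> rel (x # xs)" and bc: "(b, c) \<in> rel (x # xs)"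
    show "(a, c) \<in> rel (x # xs)"
    proof (cases "(a, b) \<in> rel xs")
      case True
      then have "b \<in> set xs" using sub by auto
      then have "b \<noteq> x" using Cons.prems by auto
      then have "(b, c) \<in> rel xs" using bc by auto
      then show ?thesis using True IH(1) unfolding trans_def by auto
    next
      case False
      then have "a = x" "b \<in> set xs" using ab by auto
      then have "b \<noteq> x" using Cons.prems by auto
      then have "(b, c) \<in> rel xs" using bc by auto
      then have "c \<in> set xs" using sub by auto
      then show ?thesis using \<open>a = x\<close> by auto
    qed
  qed
  moreover have "irrefl (rel (x # xs))"
    using IH(2) Cons.prems by (auto simp: irrefl_def)
  moreover have "total_on (set (x # xs)) (rel (x # xs))"
    using IH(3) by (auto simp: total_on_def)
  ultimately show ?case by (simp add: strict_linear_order_on_def)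
qed

definition bl :: "nat list list" where
  "bl = [[0,1,2],[0,1,2],[0,1,2],[1,2,0],[1,2,0],[2,0,1],[2,0,1],[0,2,1]]"

definition P0 :: prof where
  "P0 = \<lparr>voters = {..<7}, cands = {0,1,2}, ballot = (\<lambda>i. rel (bl ! i))\<rparr>"

definition P1 :: prof where
  "P1 = \<lparr>voters = {..<8}, cands = {0,1,2}, ballot = (\<lambda>i. rel (bl ! i))\<rparr>"

lemma bl_ok: "i < 8 \<Longrightarrow> distinct (bl ! i) \<and> set (bl ! i) = {0,1,2}"
proof -
  assume "i < 8"
  then have "i \<in> {0,1,2,3,4,5,6,7}" by auto
  then show ?thesis by (auto simp: bl_def)
qed

lemma profile_gen:
  assumes "n \<le> 8" "0 < n"
  shows "profile \<lparr>voters = {..<n}, cands = {0,1,2}, ballot = (\<lambda>i. rel (bl ! i))\<rparr>"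
proof -
  have "\<forall>i\<in>{..<n}. rel (bl ! i) \<subseteq> {0,1,2} \<times> {0,1,2} \<and> strict_linear_order_on {0,1,2} (rel (bl ! i))"
  proof
    fix i assume "i \<in> {..<n}"
    then have "i < 8" using assms by auto
    then have d: "distinct (bl ! i)" and s: "set (bl ! i) = {0,1,2}" using bl_ok by auto
    show "rel (bl ! i) \<subseteq> {0,1,2} \<times> {0,1,2} \<and> strict_linear_order_on {0,1,2} (rel (bl ! i))"
      using rel_sub[of "bl ! i"] rel_slo[OF d] s by simp
  qed
  then show ?thesis unfolding profile_def using assms by auto
qed

lemma prof_P0: "profile P0" unfolding P0_def using profile_gen[of 7] by simp
lemma prof_P1: "profile P1" unfolding P1_def using profile_gen[of 8] by simp

lemma card_filter_lt: "card {i\<in>{..<n::nat}. Q i} = length (filter Q [0..<n])"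
proof -
  have "{i\<in>{..<n}. Q i} = set (filter Q [0..<n])" by auto
  then have "card {i\<in>{..<n}. Q i} = card (set (filter Q [0..<n]))" by simp
  also have "\<dots> = length (filter Q [0..<n])" by (rule distinct_card) simp
  finally show ?thesis .
qed

lemma margin_lt: "margin \<lparr>voters = {..<n}, cands = C, ballot = B\<rparr> x y =
   int (length (filter (\<lambda>i. (x, y) \<in> B i) [0..<n])) - int (length (filter (\<lambda>i. (y, x) \<in> B i) [0..<n]))"
  unfolding margin_def using card_filter_lt[of n] by simp

lemma mP0: "margin P0 0 1 = 3" "margin P0 1 2 = 3" "margin P0 2 0 = 1"
  "margin P0 1 0 = -3" "margin P0 2 1 = -3" "margin P0 0 2 = -1"
  unfolding P0_def margin_lt by (simp_all add: bl_def upt_rec)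

lemma mP1: "margin P1 0 1 = 4" "margin P1 1 2 = 2" "margin P1 2 0 = 0"
  "margin P1 1 0 = -4" "margin P1 2 1 = -2" "margin P1 0 2 = 0"
  unfolding P1_def margin_lt by (simp_all add: bl_def upt_rec)


definition L3 :: "nat list list" where
  "L3 = [[0,1],[0,2],[1,0],[1,2],[2,0],[2,1],[0,1,2],[0,2,1],[1,0,2],[1,2,0],[2,0,1],[2,1,0]]"

lemma lists3:
  assumes "distinct \<rho>" "set \<rho> \<subseteq> {0,1,2}" "length \<rho> \<ge> 2"
  shows "\<rho> \<in> set L3"
proof -
  have "length \<rho> = card (set \<rho>)" using assms(1) by (simp add: distinct_card)
  also have "\<dots> \<le> card {0::nat,1,2}" using assms(2) by (intro card_mono) auto
  finally have "length \<rho> \<le> 3" by simp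
  then have "length \<rho> = 2 \<or> length \<rho> = 3" using assms(3) by auto
  then show ?thesis
  proof
    assume "length \<rho> = 2"
    then obtain a b where "\<rho> = [a, b]"
      by (metis (no_types, lifting) One_nat_def Suc_1 length_0_conv length_Suc_conv)
    then show ?thesis using assms by (auto simp: L3_def)
  next
    assume "length \<rho> = 3"
    then obtain a b c where "\<rho> = [a, b, c]"
      by (metis (no_types, lifting) length_0_conv length_Suc_conv numeral_3_eq_3)
    then show ?thesis using assms by (auto simp: L3_def)
  qed
qed

lemma mpath_iff:
  assumes "cands Q = {0,1,2}"
  shows "mpath Q \<rho> a b \<longleftrightarrow> \<rho> \<in> set L3 \<and> hd \<rho> = a \<and> last \<rho> = b \<and>
     (\<forall>(u, v)\<in>set (path_edges \<rho>). margin Q u v > 0)"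
proof
  assume "mpath Q \<rho> a b"
  then show "\<rho> \<in> set L3 \<and> hd \<rho> = a \<and> last \<rho> = b \<and> (\<forall>(u, v)\<in>set (path_edges \<rho>). margin Q u v > 0)"
    using lists3[of \<rho>] assms unfolding mpath_def by auto
next
  assume h: "\<rho> \<in> set L3 \<and> hd \<rho> = a \<and> last \<rho> = b \<and> (\<forall>(u, v)\<in>set (path_edges \<rho>). margin Q u v > 0)"
  have "length \<rho> \<ge> 2 \<and> distinct \<rho> \<and> set \<rho> \<subseteq> {0,1,2}" using h[THEN conjunct1]
    by (auto simp: L3_def)
  then show "mpath Q \<rho> a b" using h assms unfolding mpath_def by auto
qed

lemma strength_is_eval:
  assumes "cands Q = {0,1,2}"
  shows "strength_is Q a b = (let F = filter (\<lambda>\<rho>. hd \<rho> = a \<and> last \<rho> = b \<and>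
      (\<forall>(u, v)\<in>set (path_edges \<rho>). margin Q u v > 0)) L3 in
      if F = [] then 0 else Max (set (map (\<lambda>\<rho>. strength_is_path Q \<rho> a) F)))"
proof -
  define R where "R = (\<lambda>\<rho>. hd \<rho> = a \<and> last \<rho> = b \<and>
      (\<forall>(u, v)\<in>set (path_edges \<rho>). margin Q u v > 0))"
  have m: "mpath Q \<rho> a b \<longleftrightarrow> \<rho> \<in> set (filter R L3)" for \<rho>
    using mpath_iff[OF assms] unfolding R_def by auto
  have e: "(\<exists>\<rho>. mpath Q \<rho> a b) \<longleftrightarrow> filter R L3 \<noteq> []"
    unfolding m by (metis ex_in_conv set_empty)
  have s: "{strength_is_path Q \<rho> a | \<rho>. mpath Q \<rho> a b} = set (map (\<lambda>\<rho>. strength_is_path Q \<rho> a) (filter R L3))"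
    unfolding m by auto
  show ?thesis unfolding strength_is_def e s R_def[symmetric] Let_def by simp
qed

lemma strength_is_path_eval:
  "strength_is_path Q \<rho> a = (let S = (map (\<lambda>(u, v). margin Q u v) (filter (\<lambda>(u, v). u \<noteq> a) (path_edges \<rho>)) :: int list)
     in if S = [] then \<infinity> else ereal (real_of_int (Min (set S))))"
proof -
  have "{margin Q u v | u v. (u, v) \<in> set (path_edges \<rho>) \<and> u \<noteq> a} =
     set (map (\<lambda>(u, v). margin Q u v) (filter (\<lambda>(u, v). u \<noteq> a) (path_edges \<rho>)))"
    by force
  note eq = this
  show ?thesis unfolding strength_is_path_def Let_def eq by (simp only: set_empty)
qed

lemma strength_eval:
  "strength Q \<rho> = Min (set (map (\<lambda>(u, v). margin Q u v) (path_edges \<rho>)))"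
proof -
  have "{margin Q u v | u v. (u, v) \<in> set (path_edges \<rho>)} =
     set (map (\<lambda>(u, v). margin Q u v) (path_edges \<rho>))"
    by force
  then show ?thesis unfolding strength_def by simp
qed

lemma mP0s: "margin P0 0 (Suc 0) = 3" "margin P0 (Suc 0) 2 = 3"
  "margin P0 (Suc 0) 0 = -3" "margin P0 2 (Suc 0) = -3"
  using mP0 by simp_all
lemma mP1s: "margin P1 0 (Suc 0) = 4" "margin P1 (Suc 0) 2 = 2"
  "margin P1 (Suc 0) 0 = -4" "margin P1 2 (Suc 0) = -2"
  using mP1 by simp_all

lemma cP0: "cands P0 = {0,1,2}" by (simp add: P0_def)
lemma cP1: "cands P1 = {0,1,2}" by (simp add: P1_def)

lemma sis_P0_21: "strength_is P0 2 1 = 3"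
  by (simp add: strength_is_eval[OF cP0] L3_def path_edges_def mP0 mP0s strength_is_path_eval)

lemma sis_P0_20: "strength_is P0 2 0 = \<infinity>"
  by (simp add: strength_is_eval[OF cP0] L3_def path_edges_def mP0 mP0s strength_is_path_eval)

lemma sis_P0_22: "strength_is P0 2 2 = 0"
  by (simp add: strength_is_eval[OF cP0] L3_def path_edges_def mP0 mP0s strength_is_path_eval)

lemma sis_P1_21: "strength_is P1 2 1 = 0"
  by (simp add: strength_is_eval[OF cP1] L3_def path_edges_def mP1 mP1s strength_is_path_eval)

lemma sc_P0: "(1, 2) \<in> sc P0"
proof -
  have "\<forall>\<rho>. mpath P0 \<rho> 2 1 \<longrightarrow> margin P0 1 2 > strength P0 \<rho>"
    unfolding mpath_iff[OF cP0] by (auto simp: L3_def path_edges_def mP0 mP0s strength_eval)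
  then show ?thesis unfolding sc_def using cP0 mP0 by auto
qed

lemma nisc_P0: "(1, 2) \<notin> isc P0"
  unfolding isc_def using sis_P0_21 mP0 by simp

lemma isc_P1: "(1, 2) \<in> isc P1"
  unfolding isc_def using sis_P1_21 mP1 cP1 by simp


lemma margin_self: "margin Q x x = 0" by (simp add: margin_def)

lemma adds: "adds_voter P0 P1 7"
proof -
  have "insert 7 {..<7::nat} = {..<8}" by auto
  then show ?thesis unfolding adds_voter_def using prof_P0 prof_P1
    by (simp add: P0_def P1_def)
qed

lemma ballot7: "ballot P1 7 = rel [0,2,1]" by (simp add: P1_def bl_def)

lemma ISC_P0: "2 \<in> ISC P0"
proof -
  have "(y, 2) \<notin> isc P0" for y
  proof (cases "y \<in> {0,1,2}")
    case True
    then consider "y = 0" | "y = 1" | "y = 2" by auto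
    then show ?thesis
    proof cases
      case 1 then show ?thesis unfolding isc_def using sis_P0_20 mP0 by simp
    next
      case 2 then show ?thesis using nisc_P0 by simp
    next
      case 3 then show ?thesis unfolding isc_def using sis_P0_22 margin_self[of P0 2] by simp
    qed
  next
    case False then show ?thesis unfolding isc_def using cP0 by auto
  qed
  then show ?thesis unfolding ISC_def using cP0 by auto
qed

theorem proposition8p8:
  shows "(\<exists>P. profile P \<and> \<not> sc P \<subseteq> isc P)
       \<and> \<not> positive_involvement_in_defeat isc
       \<and> \<not> tolerant_positive_involvement ISC"
proof (intro conjI)
  show "\<exists>P. profile P \<and> \<not> sc P \<subseteq> isc P"
    using prof_P0 sc_P0 nisc_P0 by blast
  have b: "(2, 1) \<in> ballot P1 7" unfolding ballot7 by simp
  show "\<not> positive_involvement_in_defeat isc"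
    unfolding positive_involvement_in_defeat_def using adds nisc_P0 isc_P1 b by blast
  have t: "\<forall>y\<in>cands P0. y \<noteq> 2 \<and> \<not> margin P0 2 y > 0 \<longrightarrow> (2, y) \<in> ballot P1 7"
    unfolding cP0 ballot7 using mP0 by auto
  have n: "2 \<notin> ISC P1" unfolding ISC_def using isc_P1 by auto
  show "\<not> tolerant_positive_involvement ISC"
    unfolding tolerant_positive_involvement_def using adds ISC_P0 t n by blast
qed

end
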